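(* Let $X\subseteq\mathbb{R}$ be dense in $\mathbb{R}$ (with the subspace topology). Then $X$ is a Baire space if and only if $G\cap X$ is dense in $X$ for every dense $G_\delta$ subset $G$ of $\mathbb{R}$.
   Context: A Baire space is a space in which countable intersections of dense open sets are dense. *)

theory Defs
  imports "HOL-Analysis.Analysis"
begin

text \<open>A topological space is a Baire space if countable intersections of dense open sets
  are dense. Countable families are given as sequences (repetitions allowed), so the
  empty family is harmless.\<close>
definition Baire_space :: "'a topology \<Rightarrow> bool" where
  "Baire_space T \<longleftrightarrow>
     (\<forall>U :: nat \<Rightarrow> 'a set.
        (\<forall>n. openin T (U n) \<and> T closure_of (U n) = topspace T)
        \<longrightarrow> T closure_of (\<Inter>n. U n) = topspace T)"

end

theory Submission
  imports Defs
begin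

lemma sub_dense_iff:
  fixes X A :: "real set"
  assumes "A \<subseteq> X"
  shows "(subtopology euclidean X) closure_of A = X \<longleftrightarrow> X \<subseteq> closure A"
  using assms by (auto simp: closure_of_subtopology Int_absorb1)

lemma open_dense_Int:
  fixes W X :: "real set"
  assumes "open W" "closure W = UNIV" "closure X = UNIV"
  shows "closure (W \<inter> X) = UNIV"
proof -
  have "W \<subseteq> closure (W \<inter> X)" using open_Int_closure_subset[OF assms(1), of X] assms(3) by simp
  then have "closure W \<subseteq> closure (W \<inter> X)" by (simp add: closure_minimal)
  then show ?thesis using assms(2) by auto
qed

theorem lemma4p6:
  fixes X :: "real set"
  assumes "closure X = UNIV"
  shows "Baire_space (subtopology euclidean X) \<longleftrightarrow>
    (\<forall>G :: real set. gdelta_in euclidean G \<and> closure G = UNIV \<longrightarrow>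
        (subtopology euclidean X) closure_of (G \<inter> X) = X)"
proof
  assume B: "Baire_space (subtopology euclidean X)"
  show "\<forall>G :: real set. gdelta_in euclidean G \<and> closure G = UNIV \<longrightarrow>
        (subtopology euclidean X) closure_of (G \<inter> X) = X"
  proof (intro allI impI, elim conjE)
    fix G :: "real set"
    assume g: "gdelta_in euclidean G" and d: "closure G = UNIV"
    then obtain U where U: "countable U" "\<And>u. u \<in> U \<Longrightarrow> open u" "\<Inter>U = G"
      by (auto simp: gdelta_in_alt intersection_of_def)
    show "(subtopology euclidean X) closure_of (G \<inter> X) = X"
    proof (cases "U = {}")
      case True
      then have "G = UNIV" using U by auto
      then show ?thesis by (simp add: sub_dense_iff closure_subset)
    next
      case False
      define V where "V n = from_nat_into U n \<inter> X" for n
      have fU: "from_nat_into U n \<in> U" for n using False by (simp add: from_nat_into)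
      have Gsub: "G \<subseteq> from_nat_into U n" for n using fU U(3) by auto
      have "closure (from_nat_into U n) = UNIV" for n
        using closure_mono[OF Gsub[of n]] d by auto
      then have cV: "closure (V n) = UNIV" for n
        unfolding V_def using open_dense_Int U(2)[OF fU] assms by blast
      have "\<forall>n. openin (subtopology euclidean X) (V n) \<and>
            (subtopology euclidean X) closure_of (V n) = topspace (subtopology euclidean X)"
        using cV U(2)[OF fU] by (auto simp: V_def openin_subtopology sub_dense_iff)
      with B have "(subtopology euclidean X) closure_of (\<Inter>n. V n) = X"
        unfolding Baire_space_def by auto
      moreover have "(\<Inter>n. V n) = G \<inter> X"
        using U(3) range_from_nat_into[OF False U(1)] unfolding V_def by auto
      ultimately show ?thesis by simp
    qed
  qed
next
  assume H: "\<forall>G :: real set. gdelta_in euclidean G \<and> closure G = UNIV \<longrightarrow>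
        (subtopology euclidean X) closure_of (G \<inter> X) = X"
  show "Baire_space (subtopology euclidean X)"
    unfolding Baire_space_def
  proof (intro allI impI)
    fix V :: "nat \<Rightarrow> real set"
    assume V: "\<forall>n. openin (subtopology euclidean X) (V n) \<and>
        (subtopology euclidean X) closure_of (V n) = topspace (subtopology euclidean X)"
    have "\<exists>W. open W \<and> V n = W \<inter> X" for n using V by (auto simp: openin_subtopology)
    then obtain W where W: "\<And>n. open (W n)" "\<And>n. V n = W n \<inter> X" by metis
    have VX: "V n \<subseteq> X" for n using W by auto
    have "X \<subseteq> closure (V n)" for n using V sub_dense_iff[OF VX] by auto
    then have "UNIV \<subseteq> closure (V n)" for n
      using closure_mono[of X "closure (V n)"] assms by simp
    then have cW: "closure (W n) = UNIV" for n
      using closure_mono[of "V n" "W n"] W by auto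
    have "UNIV \<subseteq> closure (\<Inter>(range W))"
      using Baire[of "UNIV::real set" "range W"] W(1) cW by auto
    then have dG: "closure (\<Inter>(range W)) = UNIV" by auto
    have gG: "gdelta_in euclidean (\<Inter>(range W))"
      by (auto simp: gdelta_in_alt intersection_of_def W(1) intro!: exI[of _ "range W"])
    have "(subtopology euclidean X) closure_of ((\<Inter>(range W)) \<inter> X) = X"
      using H dG gG by blast
    moreover have "(\<Inter>(range W)) \<inter> X = (\<Inter>n. V n)" using W by auto
    ultimately show "(subtopology euclidean X) closure_of (\<Inter>n. V n) = topspace (subtopology euclidean X)"
      by simp
  qed
qed

end
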